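(* For all real numbers $x,y$ with $|x|+|y|\le 1$, \[ \left|1+\frac x2-\sqrt{1+x+y}\right| \le 1-\frac{|x|}2-\sqrt{1-|x|-|y|}. \] *)

theory Defs
  imports Complex_Main
begin
end

theory Submission
  imports Defs
begin

theorem lemma8:
  fixes x y :: real
  assumes "\<bar>x\<bar> + \<bar>y\<bar> \<le> 1"
  shows "\<bar>1 + x / 2 - sqrt (1 + x + y)\<bar> \<le> 1 - \<bar>x\<bar> / 2 - sqrt (1 - \<bar>x\<bar> - \<bar>y\<bar>)"
proof -
  define u where "u = sqrt (1 + x + y)"
  define v where "v = sqrt (1 - \<bar>x\<bar> - \<bar>y\<bar>)"
  have h1: "1 + x + y \<ge> 0" "1 - \<bar>x\<bar> - \<bar>y\<bar> \<ge> 0" using assms by (auto simp: abs_if split: if_splits)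
  have u0: "u \<ge> 0" and v0: "v \<ge> 0" unfolding u_def v_def using h1 by auto
  have u2: "u^2 = 1 + x + y" unfolding u_def using h1 by simp
  have v2: "v^2 = 1 - \<bar>x\<bar> - \<bar>y\<bar>" unfolding v_def using h1 by simp
  have ub: "2*u \<le> 1 + u^2" using sum_squares_ge_zero[of "u-1" 0]
    by (simp add: power2_eq_square algebra_simps)
  have vb: "2*v \<le> 1 + v^2" using sum_squares_ge_zero[of "v-1" 0]
    by (simp add: power2_eq_square algebra_simps)
  have A: "1 + x/2 - u \<le> 1 - \<bar>x\<bar>/2 - v"
  proof (cases "x \<ge> 0")
    case True
    have "(v + x)^2 \<le> u^2"
    proof -
      have e1: "x * (2*v) \<le> x * (1 + v^2)" by (rule mult_left_mono[OF vb True])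
      have e2: "x * v^2 = x - x^2 - x * \<bar>y\<bar>" proof -
        have "v^2 = 1 - x - \<bar>y\<bar>" using v2 True by simp
        then have "x * v^2 = x * (1 - x - \<bar>y\<bar>)" by simp
        then show ?thesis by (simp add: algebra_simps power2_eq_square)
      qed
      have e3: "x * \<bar>y\<bar> \<ge> 0" using True by simp
      have e4: "(v + x)^2 = v^2 + 2*(x*v) + x^2" by (simp add: power2_eq_square algebra_simps)
      have e5: "- \<bar>y\<bar> \<le> y" by simp
      have e6: "x * (2*v) = 2*(x*v)" "x * (1 + v^2) = x + x * v^2" by (simp_all add: algebra_simps)
      show ?thesis unfolding e4 u2 using e1 e2 e3 e5 e6 v2 by linarith
    qed
    then have "v + x \<le> u" using u0 by (rule power2_le_imp_le)
    then show ?thesis using True by simp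
  next
    case False
    have "v^2 \<le> u^2" using u2 v2 by simp
    then have "v \<le> u" using u0 by (rule power2_le_imp_le)
    then show ?thesis using False by simp
  qed
  have B: "u - 1 - x/2 \<le> 1 - \<bar>x\<bar>/2 - v"
  proof (cases "x \<ge> 0")
    case True
    have "(u+v)^2 \<le> 2*(u^2+v^2)" using sum_squares_ge_zero[of "u-v" 0]
      by (simp add: power2_eq_square algebra_simps)
    also have "\<dots> \<le> 2^2" using u2 v2 True by (simp add: abs_if)
    finally have "u + v \<le> 2" by (rule power2_le_imp_le) simp
    then show ?thesis using True by simp
  next
    case False
    have "u + v \<le> 2 - \<bar>x\<bar>" using ub vb u2 v2 False by (simp add: abs_if split: if_splits)
    then show ?thesis using False by simp
  qed
  show ?thesis using A B unfolding u_def[symmetric] v_def[symmetric] by (simp add: abs_le_iff)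
qed

end
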